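(* Let $0<a\le 1$, let $k\ge 1$, and let $z_1,\dots,z_k\in\mathbb{C}$ be pairwise distinct with $|z_j|\le 1$ and $z_j\neq a$ for $j=1,\dots,k$. Let $r_1,\dots,r_k\ge 0$ be integers (independent of $n$), and for each integer $n\ge 2$ let $s_1(n),\dots,s_k(n)$ be integers with $0\le s_j(n)\le n-1$. Assume: (i) $r_j+s_j(n)\ge 1$ for all $j=1,\dots,k$ and all $n\ge 2$, and $r_j\ge 1$ for some $j\in\{1,\dots,k\}$; (ii) $s_j(n)/n\to 0$ as $n\to\infty$ for each $j\in\{1,\dots,k\}$; (iii) with $X=\{j\in\{1,\dots,k\}: r_j\ge 1\}$ and $P(z)=(z-a)\prod_{j\in X}(z-z_j)^{r_j}$, there exists $\zeta\in\mathbb{C}$ with $|\zeta|\le 1$, $P'(\zeta)=0$ and $|a-\zeta|<1$. For $n\ge 2$ let $n_j=r_jn+s_j(n)$ and $$p_n(z)=(z-a)^n\prod_{j=1}^{k}(z-z_j)^{n_j},\quad z\in\mathbb{C}.$$ Then there exists an integer $n_0$ such that for every $n\ge n_0$ there exists $\zeta\neq a$ with $p_n'(\zeta)=0$ and $|a-\zeta|<1$. *)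

theory Defs
  imports "HOL-Analysis.Analysis"
begin

end

theory Submission imports Defs "HOL-Computational_Algebra.Fundamental_Theorem_Algebra" begin

lemma near_root:
  fixes p :: "complex poly"
  assumes "degree p = m" "m \<ge> 1" "1 \<le> norm (lead_coeff p)" "norm (poly p x) < e^m" "0 < e"
  shows "\<exists>\<rho>. poly p \<rho> = 0 \<and> norm (x - \<rho>) < e"
proof (rule ccontr)
  assume H: "\<not> ?thesis"
  obtain root where R: "smult (lead_coeff p) (\<Prod>i<degree p. [:-root i, 1:]) = p"
    by (rule complex_poly_decompose')
  have pr: "poly p y = lead_coeff p * (\<Prod>i<m. (y - root i))" for y
    by (subst R[symmetric]) (simp add: poly_prod assms(1))
  have "poly p (root i) = 0" if "i<m" for i
    unfolding pr using that by (auto intro!: prod_zero)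
  hence ge: "e \<le> norm (x - root i)" if "i<m" for i using H that by force
  have "e^m = (\<Prod>i<m. e)" by simp
  also have "\<dots> \<le> (\<Prod>i<m. norm (x - root i))"
    by (rule prod_mono) (use ge assms in auto)
  also have "\<dots> \<le> norm (lead_coeff p) * (\<Prod>i<m. norm (x - root i))"
    using mult_right_mono[OF assms(3), of "\<Prod>i<m. norm (x - root i)"] by (simp add: prod_nonneg)
  also have "\<dots> = norm (poly p x)" by (simp add: pr norm_mult prod_norm)
  finally show False using assms(4) by simp
qed

lemma Dpow: "((\<lambda>u. (u - c)^N) has_field_derivative (of_nat N * (x - c)^(N-1))) (at x)"
  for c x :: complex
  by (auto intro!: derivative_eq_intros)

lemma logD: "x \<noteq> c \<Longrightarrow> of_nat N * (x - c)^(N-1) = (x-c)^N * (of_nat N / (x - c))"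
  for x c :: complex
  by (cases N) auto

lemma sum_prod_remove:
  fixes f d :: "'i \<Rightarrow> complex"
  assumes "finite I" "\<And>j. j\<in>I \<Longrightarrow> f j \<noteq> 0"
  shows "(\<Sum>j\<in>I. d j * (\<Prod>i\<in>I-{j}. f i)) = (\<Prod>i\<in>I. f i) * (\<Sum>j\<in>I. d j / f j)"
proof -
  have "d j * (\<Prod>i\<in>I-{j}. f i) = (\<Prod>i\<in>I. f i) * (d j / f j)" if "j\<in>I" for j
    using prod.remove[OF assms(1) that, of f] assms(2)[OF that] by (simp add: divide_simps ac_simps)
  then show ?thesis by (simp add: sum_distrib_left)
qed

lemma sum_logderiv:
  fixes x :: complex
  assumes "finite I" "\<And>j. j\<in>I \<Longrightarrow> x \<noteq> c j"
  shows "(\<Sum>j\<in>I. of_nat (m j) * (x - c j)^(m j - 1) * (\<Prod>i\<in>I-{j}. (x - c i)^(m i)))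
       = (\<Prod>i\<in>I. (x - c i)^(m i)) * (\<Sum>j\<in>I. of_nat (m j) / (x - c j))"
proof -
  have "of_nat (m j) * (x - c j)^(m j - 1) * (\<Prod>i\<in>I-{j}. (x - c i)^(m i))
      = (\<Prod>i\<in>I. (x - c i)^(m i)) * (of_nat (m j) / (x - c j))" if "j\<in>I" for j
    using prod.remove[OF assms(1) that, of "\<lambda>i. (x - c i)^(m i)"] logD[of x "c j" "m j"]
      assms(2)[OF that] by (simp add: mult_ac)
  then show ?thesis by (simp add: sum_distrib_left)
qed

lemma monic_lin_prod:
  "degree (\<Prod>i\<in>J. [:-c i, 1:]) = card J \<and> lead_coeff (\<Prod>i\<in>J. [:-c i, 1:]) = (1::complex)"
proof
  show "degree (\<Prod>i\<in>J. [:-c i, 1:]) = card J" by (simp add: degree_prod_sum_eq)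
  have "lead_coeff (\<Prod>i\<in>J. [:-c i, 1:]) = (\<Prod>i\<in>J. lead_coeff [:-c i, 1:])"
    by (rule lead_coeff_prod)
  also have "\<dots> = 1" by simp
  finally show "lead_coeff (\<Prod>i\<in>J. [:-c i, 1:]) = (1::complex)" .
qed

lemma monic_T:
  "degree ([:-a, 1:] * (\<Prod>i\<in>J. [:-c i, 1:])) = Suc (card J) \<and>
   lead_coeff ([:-a, 1:] * (\<Prod>i\<in>J. [:-c i, 1:])) = (1::complex)"
proof
  have M: "degree (\<Prod>i\<in>J. [:-c i, 1:]) = card J" "lead_coeff (\<Prod>i\<in>J. [:-c i, 1:]) = (1::complex)"
    using monic_lin_prod[of c J] by auto
  hence nz: "(\<Prod>i\<in>J. [:-c i, 1:]) \<noteq> 0" by auto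
  show "degree ([:-a, 1:] * (\<Prod>i\<in>J. [:-c i, 1:])) = Suc (card J)"
    using M nz by (subst degree_mult_eq) auto
  have "lead_coeff ([:-a, 1:] * (\<Prod>i\<in>J. [:-c i, 1:])) = lead_coeff [:-a, 1:] * lead_coeff (\<Prod>i\<in>J. [:-c i, 1:])"
    by (rule lead_coeff_mult)
  then show "lead_coeff ([:-a, 1:] * (\<Prod>i\<in>J. [:-c i, 1:])) = (1::complex)" using M by simp
qed

theorem theorem3:
  fixes a :: real and k :: nat
    and z :: "nat \<Rightarrow> complex" and r :: "nat \<Rightarrow> nat"
    and s :: "nat \<Rightarrow> nat \<Rightarrow> nat"
  assumes a_pos: "0 < a" and a_le: "a \<le> 1"
    and k_pos: "k \<ge> 1"
    and z_inj: "inj_on z {1..k}"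
    and z_disc: "\<And>j. j \<in> {1..k} \<Longrightarrow> norm (z j) \<le> 1"
    and z_ne_a: "\<And>j. j \<in> {1..k} \<Longrightarrow> z j \<noteq> complex_of_real a"
    and s_bound: "\<And>n j. n \<ge> 2 \<Longrightarrow> j \<in> {1..k} \<Longrightarrow> s n j \<le> n - 1"
    and rs_pos: "\<And>n j. n \<ge> 2 \<Longrightarrow> j \<in> {1..k} \<Longrightarrow> r j + s n j \<ge> 1"
    and r_some: "\<exists>j\<in>{1..k}. r j \<ge> 1"
    and s_lim: "\<And>j. j \<in> {1..k} \<Longrightarrow> (\<lambda>n. real (s n j) / real n) \<longlonglongrightarrow> 0"
    and crit: "\<exists>\<zeta>. norm \<zeta> \<le> 1
        \<and> deriv (\<lambda>w. (w - complex_of_real a) *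
              (\<Prod>j\<in>{j\<in>{1..k}. r j \<ge> 1}. (w - z j) ^ r j)) \<zeta> = 0
        \<and> norm (complex_of_real a - \<zeta>) < 1"
  shows "\<exists>n0::nat. \<forall>n\<ge>n0. \<exists>\<zeta>. \<zeta> \<noteq> complex_of_real a
        \<and> deriv (\<lambda>w. (w - complex_of_real a) ^ n *
              (\<Prod>j\<in>{1..k}. (w - z j) ^ (r j * n + s n j))) \<zeta> = 0
        \<and> norm (complex_of_real a - \<zeta>) < 1"
proof -
  define I where "I = {1..k}"
  define X where "X = {j\<in>I. r j \<ge> 1}"
  define A where "A = complex_of_real a"
  define N where "N = (\<lambda>n j. r j * n + s n j)"
  define pn where "pn = (\<lambda>n w. (w - A)^n * (\<Prod>j\<in>I. (w - z j)^(N n j)))"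
  define P where "P = (\<lambda>w. (w - A) * (\<Prod>j\<in>X. (w - z j)^(r j)))"
  have finI: "finite I" and finX: "finite X" and XI: "X \<subseteq> I"
    unfolding I_def X_def by auto
  have zI: "\<And>j. j\<in>I \<Longrightarrow> z j \<noteq> A" using z_ne_a unfolding I_def A_def by auto
  have zinj: "\<And>i j. i\<in>I \<Longrightarrow> j\<in>I \<Longrightarrow> z i = z j \<Longrightarrow> i = j"
    using z_inj unfolding I_def by (meson inj_onD)
  have cardI: "card I = k" unfolding I_def by simp
  obtain \<zeta> where za: "norm (A - \<zeta>) < 1" and zd: "deriv P \<zeta> = 0"
    using crit unfolding P_def X_def I_def A_def by blast
  have DP: "(P has_field_derivative ((x - A) * (\<Sum>j\<in>X. of_nat (r j) * (x - z j)^(r j - 1) * (\<Prod>i\<in>X-{j}. (x - z i)^(r i)))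
      + 1 * (\<Prod>j\<in>X. (x - z j)^(r j)))) (at x)" for x
    unfolding P_def by (rule DERIV_mult'[OF _ has_field_derivative_prod]) (auto intro!: derivative_eq_intros Dpow)
  have Dpn: "(pn n has_field_derivative ((x - A)^n * (\<Sum>j\<in>I. of_nat (N n j) * (x - z j)^(N n j - 1) * (\<Prod>i\<in>I-{j}. (x - z i)^(N n i)))
      + of_nat n * (x - A)^(n-1) * (\<Prod>j\<in>I. (x - z j)^(N n j)))) (at x)" for n x
    unfolding pn_def by (rule DERIV_mult'[OF Dpow has_field_derivative_prod]) (rule Dpow)
  have main: "\<exists>n0::nat. \<forall>n\<ge>n0. \<exists>w. w \<noteq> A \<and> deriv (pn n) w = 0 \<and> norm (A - w) < 1"
  proof -
    have zeA: "\<zeta> \<noteq> A"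
    proof
      assume h: "\<zeta> = A"
      have "deriv P \<zeta> = (\<Prod>j\<in>X. (A - z j)^(r j))"
        using DERIV_imp_deriv[OF DP[of \<zeta>]] h by simp
      also have "\<dots> \<noteq> 0" using zI XI finX by (auto simp: prod_zero_iff)
      finally show False using zd by simp
    qed
    show ?thesis
    proof (cases "\<exists>j0\<in>X. \<zeta> = z j0")
      case True
      then obtain j0 where j0: "j0 \<in> X" "\<zeta> = z j0" by blast
      have j0I: "j0 \<in> I" using j0 XI by auto
      have r2: "r j0 \<ge> 2"
      proof (rule ccontr)
        assume "\<not> ?thesis"
        hence r1: "r j0 = 1" using j0 unfolding X_def by auto
        have p0: "(\<Prod>j\<in>X. (\<zeta> - z j)^(r j)) = 0"
          using j0 r1 finX by (auto simp: prod_zero_iff intro!: bexI[of _ j0])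
        have s0: "(\<Sum>j\<in>X-{j0}. of_nat (r j) * (\<zeta> - z j)^(r j - 1) * (\<Prod>i\<in>X-{j}. (\<zeta> - z i)^(r i))) = 0"
        proof (rule sum.neutral, rule ballI)
          fix j assume "j \<in> X - {j0}"
          hence "(\<Prod>i\<in>X-{j}. (\<zeta> - z i)^(r i)) = 0"
            using j0 r1 finX by (auto simp: prod_zero_iff intro!: bexI[of _ j0])
          thus "of_nat (r j) * (\<zeta> - z j)^(r j - 1) * (\<Prod>i\<in>X-{j}. (\<zeta> - z i)^(r i)) = 0" by simp
        qed
        have pnz: "(\<Prod>i\<in>X-{j0}. (\<zeta> - z i)^(r i)) \<noteq> 0"
          using finX j0 zinj XI by (auto simp: prod_zero_iff)
        have "deriv P \<zeta> = (\<zeta> - A) * (\<Sum>j\<in>X. of_nat (r j) * (\<zeta> - z j)^(r j - 1) * (\<Prod>i\<in>X-{j}. (\<zeta> - z i)^(r i)))"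
          using DERIV_imp_deriv[OF DP[of \<zeta>]] p0 by simp
        also have "\<dots> = (\<zeta> - A) * (\<Prod>i\<in>X-{j0}. (\<zeta> - z i)^(r i))"
          using sum.remove[OF finX j0(1), of "\<lambda>j. of_nat (r j) * (\<zeta> - z j)^(r j - 1) * (\<Prod>i\<in>X-{j}. (\<zeta> - z i)^(r i))"]
            s0 r1 by simp
        also have "\<dots> \<noteq> 0" using pnz zeA by simp
        finally show False using zd by simp
      qed
      have "\<forall>n\<ge>1. \<zeta> \<noteq> A \<and> deriv (pn n) \<zeta> = 0 \<and> norm (A - \<zeta>) < 1"
      proof (intro allI impI conjI)
        fix n :: nat assume n1: "n \<ge> 1"
        have N2: "N n j0 \<ge> 2" unfolding N_def using r2 n1
          by (metis le_add1 le_trans mult_le_mono nat_mult_1_right)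
        have p0: "(\<Prod>j\<in>I. (\<zeta> - z j)^(N n j)) = 0"
          using j0 j0I N2 finI by (auto simp: prod_zero_iff intro!: bexI[of _ j0])
        have s0: "(\<Sum>j\<in>I. of_nat (N n j) * (\<zeta> - z j)^(N n j - 1) * (\<Prod>i\<in>I-{j}. (\<zeta> - z i)^(N n i))) = 0"
        proof (rule sum.neutral, rule ballI)
          fix j assume jI: "j \<in> I"
          show "of_nat (N n j) * (\<zeta> - z j)^(N n j - 1) * (\<Prod>i\<in>I-{j}. (\<zeta> - z i)^(N n i)) = 0"
          proof (cases "j = j0")
            case True
            thus ?thesis using j0 N2 by simp
          next
            case False
            hence "(\<Prod>i\<in>I-{j}. (\<zeta> - z i)^(N n i)) = 0"
              using j0 j0I N2 finI by (auto simp: prod_zero_iff intro!: bexI[of _ j0])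
            thus ?thesis by simp
          qed
        qed
        show "deriv (pn n) \<zeta> = 0"
          using DERIV_imp_deriv[OF Dpn[of n \<zeta>]] p0 s0 by simp
      qed (use zeA za in auto)
      thus ?thesis by blast
    next
      case False
      hence zX: "\<And>j. j\<in>X \<Longrightarrow> \<zeta> \<noteq> z j" by blast
      define S where "S = (\<Sum>j\<in>I. of_nat (r j) / (\<zeta> - z j))"
      have SX: "(\<Sum>j\<in>X. of_nat (r j) / (\<zeta> - z j)) = S"
        unfolding S_def by (rule sum.mono_neutral_left) (use finI XI in \<open>auto simp: X_def\<close>)
      have PXnz: "(\<Prod>j\<in>X. (\<zeta> - z j)^(r j)) \<noteq> 0" using zX finX by (auto simp: prod_zero_iff)
      have L: "1 + (\<zeta> - A) * S = 0"
      proof -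
        have "deriv P \<zeta> = (\<zeta> - A) * ((\<Prod>j\<in>X. (\<zeta> - z j)^(r j)) * S) + 1 * (\<Prod>j\<in>X. (\<zeta> - z j)^(r j))"
          using DERIV_imp_deriv[OF DP[of \<zeta>]] sum_logderiv[OF finX, of \<zeta> z r] zX SX by simp
        also have "\<dots> = (\<Prod>j\<in>X. (\<zeta> - z j)^(r j)) * (1 + (\<zeta> - A) * S)" by (simp add: algebra_simps)
        finally show ?thesis using zd PXnz by simp
      qed
      have G0val: "(\<Prod>j\<in>I. (\<zeta> - z j)) + (\<zeta> - A) * (\<Sum>j\<in>I. of_nat (r j) * (\<Prod>i\<in>I-{j}. (\<zeta> - z i))) = 0"
      proof (cases "\<exists>j1\<in>I. \<zeta> = z j1")
        case True
        then obtain j1 where j1: "j1 \<in> I" "\<zeta> = z j1" by blast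
        have rj1: "r j1 = 0"
        proof (rule ccontr)
          assume "r j1 \<noteq> 0"
          hence "j1 \<in> X" using j1 unfolding X_def by auto
          thus False using zX j1 by auto
        qed
        have p0: "(\<Prod>j\<in>I. (\<zeta> - z j)) = 0" using j1 finI by (auto simp: prod_zero_iff)
        have "(\<Sum>j\<in>I. of_nat (r j) * (\<Prod>i\<in>I-{j}. (\<zeta> - z i))) = 0"
        proof (rule sum.neutral, rule ballI)
          fix j assume "j \<in> I"
          show "of_nat (r j) * (\<Prod>i\<in>I-{j}. (\<zeta> - z i)) = 0"
          proof (cases "j = j1")
            case True thus ?thesis using rj1 by simp
          next
            case False
            hence "(\<Prod>i\<in>I-{j}. (\<zeta> - z i)) = 0" using j1 finI by (auto simp: prod_zero_iff)
            thus ?thesis by simp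
          qed
        qed
        thus ?thesis using p0 by simp
      next
        case False
        hence nz: "\<And>j. j\<in>I \<Longrightarrow> \<zeta> - z j \<noteq> 0" by auto
        have "(\<Sum>j\<in>I. of_nat (r j) * (\<Prod>i\<in>I-{j}. (\<zeta> - z i))) = (\<Prod>j\<in>I. (\<zeta> - z j)) * S"
          unfolding S_def by (rule sum_prod_remove[OF finI nz])
        hence "(\<Prod>j\<in>I. (\<zeta> - z j)) + (\<zeta> - A) * (\<Sum>j\<in>I. of_nat (r j) * (\<Prod>i\<in>I-{j}. (\<zeta> - z i)))
            = (\<Prod>j\<in>I. (\<zeta> - z j)) * (1 + (\<zeta> - A) * S)" by (simp add: algebra_simps)
        thus ?thesis using L by simp
      qed
      define c where "c = (\<lambda>n j. real (r j) + real (s n j) / real n)"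
      define Gp where "Gp = (\<lambda>n. (\<Prod>j\<in>I. [:-z j, 1:]) + (\<Sum>j\<in>I. smult (complex_of_real (c n j)) ([:-A, 1:] * (\<Prod>i\<in>I-{j}. [:-z i, 1:]))))"
      have Gev: "poly (Gp n) w = (\<Prod>j\<in>I. (w - z j)) + (w - A) * (\<Sum>j\<in>I. of_real (c n j) * (\<Prod>i\<in>I-{j}. (w - z i)))" for n w
        unfolding Gp_def by (simp add: poly_sum poly_prod sum_distrib_left algebra_simps)
      have Gdeg: "degree (Gp n) = k \<and> norm (lead_coeff (Gp n)) \<ge> 1" for n
      proof -
        have Q: "degree (\<Prod>j\<in>I. [:-z j, 1:]) = k" "lead_coeff (\<Prod>j\<in>I. [:-z j, 1:]) = 1"
          using monic_lin_prod[of z I] cardI by auto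
        have T: "degree ([:-A, 1:] * (\<Prod>i\<in>I-{j}. [:-z i, 1:])) = k"
             "lead_coeff ([:-A, 1:] * (\<Prod>i\<in>I-{j}. [:-z i, 1:])) = 1" if "j \<in> I" for j
        proof -
          have "card (I - {j}) = k - 1" using that finI cardI by simp
          hence "Suc (card (I - {j})) = k" using k_pos by simp
          thus "degree ([:-A, 1:] * (\<Prod>i\<in>I-{j}. [:-z i, 1:])) = k"
             "lead_coeff ([:-A, 1:] * (\<Prod>i\<in>I-{j}. [:-z i, 1:])) = 1"
            using monic_T[of A z "I-{j}"] by auto
        qed
        define Qp where "Qp = (\<Prod>j\<in>I. [:-z j, 1:])"
        define Tp where "Tp = (\<lambda>j. [:-A, 1:] * (\<Prod>i\<in>I-{j}. [:-z i, 1:]))"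
        have Gform: "Gp n = Qp + (\<Sum>j\<in>I. smult (complex_of_real (c n j)) (Tp j))"
          unfolding Gp_def Qp_def Tp_def by simp
        have Q': "degree Qp = k" "coeff Qp k = 1" using Q unfolding Qp_def by auto
        have T': "degree (Tp j) = k" "coeff (Tp j) k = 1" if "j \<in> I" for j
          using T[OF that] unfolding Tp_def by auto
        have ck: "coeff (Gp n) k = 1 + of_real (\<Sum>j\<in>I. c n j)"
        proof -
          have "coeff (Gp n) k = coeff Qp k + (\<Sum>j\<in>I. complex_of_real (c n j) * coeff (Tp j) k)"
            unfolding Gform coeff_add coeff_sum coeff_smult by simp
          also have "(\<Sum>j\<in>I. complex_of_real (c n j) * coeff (Tp j) k) = (\<Sum>j\<in>I. complex_of_real (c n j))"
            by (rule sum.cong) (simp_all add: T')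
          finally show ?thesis using Q' by (simp add: of_real_sum)
        qed
        have cm: "coeff (Gp n) m = 0" if "m > k" for m
        proof -
          have "coeff (Gp n) m = coeff Qp m + (\<Sum>j\<in>I. complex_of_real (c n j) * coeff (Tp j) m)"
            unfolding Gform coeff_add coeff_sum coeff_smult by simp
          also have "(\<Sum>j\<in>I. complex_of_real (c n j) * coeff (Tp j) m) = 0"
            by (rule sum.neutral) (use T' that in \<open>auto intro: coeff_eq_0\<close>)
          also have "coeff Qp m = 0" using Q' that by (auto intro: coeff_eq_0)
          finally show ?thesis by simp
        qed
        have cpos: "(\<Sum>j\<in>I. c n j) \<ge> 0" unfolding c_def by (intro sum_nonneg) auto
        have ck0: "coeff (Gp n) k \<noteq> 0"
        proof
          assume "coeff (Gp n) k = 0"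
          hence "Re (coeff (Gp n) k) = 0" by simp
          thus False using ck cpos by simp
        qed
        have dk: "degree (Gp n) = k"
          using le_degree[OF ck0] degree_le[of k "Gp n"] cm by auto
        have "norm (lead_coeff (Gp n)) = 1 + (\<Sum>j\<in>I. c n j)"
          using dk ck cpos by (simp only: ) (metis abs_of_nonneg add_nonneg_nonneg norm_of_real of_real_1 of_real_add zero_le_one)
        thus ?thesis using dk cpos by simp
      qed
      have G0: "(\<lambda>n. poly (Gp n) \<zeta>) \<longlonglongrightarrow> 0"
      proof -
        have eq: "poly (Gp n) \<zeta> = (\<zeta> - A) * (\<Sum>j\<in>I. of_real (real (s n j) / real n) * (\<Prod>i\<in>I-{j}. (\<zeta> - z i)))" for n
        proof -
          have "(\<Sum>j\<in>I. of_real (c n j) * (\<Prod>i\<in>I-{j}. (\<zeta> - z i)))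
              = (\<Sum>j\<in>I. of_nat (r j) * (\<Prod>i\<in>I-{j}. (\<zeta> - z i))) + (\<Sum>j\<in>I. of_real (real (s n j) / real n) * (\<Prod>i\<in>I-{j}. (\<zeta> - z i)))"
            unfolding c_def by (simp add: sum.distrib[symmetric] algebra_simps)
          then have "poly (Gp n) \<zeta> = ((\<Prod>j\<in>I. (\<zeta> - z j)) + (\<zeta> - A) * (\<Sum>j\<in>I. of_nat (r j) * (\<Prod>i\<in>I-{j}. (\<zeta> - z i))))
               + (\<zeta> - A) * (\<Sum>j\<in>I. of_real (real (s n j) / real n) * (\<Prod>i\<in>I-{j}. (\<zeta> - z i)))"
            unfolding Gev[of n \<zeta>] by (simp only: distrib_left add.assoc)
          thus ?thesis using G0val by simp
        qed
        have sl: "(\<lambda>n. complex_of_real (real (s n j) / real n)) \<longlonglongrightarrow> 0" if "j \<in> I" for j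
        proof -
          have "j \<in> {1..k}" using that unfolding I_def by simp
          from tendsto_of_real[OF s_lim[OF this], where 'a=complex] show ?thesis by (simp only: of_real_0)
        qed
        have "(\<lambda>n. (\<zeta> - A) * (\<Sum>j\<in>I. of_real (real (s n j) / real n) * (\<Prod>i\<in>I-{j}. (\<zeta> - z i))))
              \<longlonglongrightarrow> (\<zeta> - A) * (\<Sum>j\<in>I. 0 * (\<Prod>i\<in>I-{j}. (\<zeta> - z i)))"
          by (intro tendsto_intros sl)
        thus ?thesis unfolding eq by simp
      qed
      define e where "e = 1 - norm (A - \<zeta>)"
      have epos: "e > 0" using za unfolding e_def by simp
      have "eventually (\<lambda>n. norm (poly (Gp n) \<zeta>) < e^k) sequentially"
        using order_tendstoD(2)[OF tendsto_norm_zero[OF G0], of "e^k"] epos by simp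
      then obtain N0 where N0: "\<And>n. n \<ge> N0 \<Longrightarrow> norm (poly (Gp n) \<zeta>) < e^k"
        unfolding eventually_sequentially by blast
      show ?thesis
      proof (intro exI[of _ "max N0 2"] allI impI)
        fix n assume nN: "max N0 2 \<le> n"
        hence n2: "n \<ge> 2" and nN0: "n \<ge> N0" by auto
        obtain \<rho> where root: "poly (Gp n) \<rho> = 0" and rd: "norm (\<zeta> - \<rho>) < e"
          using near_root[of "Gp n" k \<zeta> e] Gdeg[of n] k_pos N0[OF nN0] epos by auto
        have rA: "\<rho> \<noteq> A"
        proof
          assume h: "\<rho> = A"
          have "poly (Gp n) A = (\<Prod>j\<in>I. (A - z j))" using Gev[of n A] by simp
          also have "\<dots> \<noteq> 0" using zI finI by (auto simp: prod_zero_iff)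
          finally show False using root h by simp
        qed
        have rz: "\<rho> \<noteq> z j" if jI: "j \<in> I" for j
        proof
          assume h: "\<rho> = z j"
          have cpos: "c n j > 0"
          proof -
            have "r j + s n j \<ge> 1" using rs_pos[OF n2] jI unfolding I_def by auto
            hence "r j \<ge> 1 \<or> s n j \<ge> 1" by auto
            thus ?thesis unfolding c_def using n2 by (auto simp: add_pos_nonneg add_nonneg_pos)
          qed
          have p0: "(\<Prod>i\<in>I. (z j - z i)) = 0" using jI finI by (auto simp: prod_zero_iff)
          have s0: "(\<Sum>i\<in>I-{j}. of_real (c n i) * (\<Prod>l\<in>I-{i}. (z j - z l))) = 0"
          proof (rule sum.neutral, rule ballI)
            fix i assume "i \<in> I - {j}"
            hence "(\<Prod>l\<in>I-{i}. (z j - z l)) = 0" using jI finI by (auto simp: prod_zero_iff)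
            thus "of_real (c n i) * (\<Prod>l\<in>I-{i}. (z j - z l)) = 0" by simp
          qed
          have "poly (Gp n) (z j) = (z j - A) * (of_real (c n j) * (\<Prod>l\<in>I-{j}. (z j - z l)))"
            using Gev[of n "z j"] p0 sum.remove[OF finI jI, of "\<lambda>i. of_real (c n i) * (\<Prod>l\<in>I-{i}. (z j - z l))"] s0
            by simp
          also have "\<dots> \<noteq> 0"
            using zI[OF jI] cpos finI zinj jI by (auto simp: prod_zero_iff)
          finally show False using root h by simp
        qed
        have "norm (A - \<rho>) \<le> norm (A - \<zeta>) + norm (\<zeta> - \<rho>)" by (rule norm_diff_triangle_le[of A \<zeta>]) simp_all
        hence nr: "norm (A - \<rho>) < 1" using rd unfolding e_def by simp
        have rnz: "\<And>j. j \<in> I \<Longrightarrow> \<rho> - z j \<noteq> 0" using rz by auto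
        define T where "T = (\<Sum>j\<in>I. of_real (c n j) / (\<rho> - z j))"
        have "poly (Gp n) \<rho> = (\<Prod>j\<in>I. (\<rho> - z j)) + (\<rho> - A) * ((\<Prod>j\<in>I. (\<rho> - z j)) * T)"
          using Gev[of n \<rho>] sum_prod_remove[OF finI rnz, where d="\<lambda>j. complex_of_real (c n j)"] unfolding T_def by simp
        also have "\<dots> = (\<Prod>j\<in>I. (\<rho> - z j)) * (1 + (\<rho> - A) * T)" by (simp add: algebra_simps)
        finally have LT: "1 + (\<rho> - A) * T = 0" using root finI rnz by (auto simp: prod_zero_iff)
        have Nc: "of_nat (N n j) = of_nat n * complex_of_real (c n j)" for j
        proof -
          have "of_nat n * complex_of_real (c n j) = complex_of_real (real n * c n j)" by simp
          also have "real n * c n j = real (N n j)" unfolding c_def N_def using n2 by (simp add: field_simps)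
          finally show ?thesis by simp
        qed
        have sumN: "(\<Sum>j\<in>I. of_nat (N n j) / (\<rho> - z j)) = of_nat n * T"
          unfolding T_def Nc by (simp add: sum_distrib_left)
        have "deriv (pn n) \<rho> = (\<rho> - A)^n * ((\<Prod>j\<in>I. (\<rho> - z j)^(N n j)) * (of_nat n * T))
              + (\<rho> - A)^n * (of_nat n / (\<rho> - A)) * (\<Prod>j\<in>I. (\<rho> - z j)^(N n j))"
          using DERIV_imp_deriv[OF Dpn[of n \<rho>]] sum_logderiv[OF finI, of \<rho> z "N n"] rz sumN
            logD[of \<rho> A n] rA by simp
        also have "\<dots> = (\<rho> - A)^n * (\<Prod>j\<in>I. (\<rho> - z j)^(N n j)) * (of_nat n / (\<rho> - A)) * (1 + (\<rho> - A) * T)"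
          using rA by (simp add: field_simps)
        also have "\<dots> = 0" using LT by simp
        finally show "\<exists>w. w \<noteq> A \<and> deriv (pn n) w = 0 \<and> norm (A - w) < 1" using rA nr by blast
      qed
    qed
  qed
  then show ?thesis unfolding pn_def N_def A_def I_def by simp
qed

end
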